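(* Let $\alpha>0>\beta$ with $|\beta|<\alpha$, and put $\delta=\left(\frac{\alpha-\beta}{\alpha+\beta}\right)^2>1$, $K=\frac{2\alpha}{(\alpha+\beta)^2}$, $M=\delta^{\frac{1}{1-\delta}}-\delta^{\frac{\delta}{1-\delta}}$ and $T_M=\frac{\ln\delta}{K(\delta-1)}$. Let $\omega>0$, $\gamma>0$, $k_1>0$, and for $T\ge 0$, $s\in\mathbb{R}$, $y>0$ let $$\mathcal{G}_T(s,y)=\left(s-\frac{\ln y}{K}-T,\; y^{\delta}+\gamma\bigl(1+k_1\sin(2\omega s)\bigr)\right).$$ If $\gamma=M/(1+k_1)$ or $\gamma=M/(1-k_1)$, and $T=T_M$, then at every fixed point $(s,y)$ of $\mathcal{G}_T$ the derivative $D\mathcal{G}_T(s,y)$ has $1$ as a double eigenvalue and is not the identity. Moreover, these are the only situations in which $D\mathcal{G}_T(s,y)$ has a double eigenvalue $1$ at a fixed point $(s,y)$ of $\mathcal{G}_T$. *)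

theory Defs
  imports "HOL-Analysis.Analysis"
begin

definition dlt :: "real \<Rightarrow> real \<Rightarrow> real" where
  "dlt \<alpha> \<beta> = ((\<alpha> - \<beta>) / (\<alpha> + \<beta>))^2"

definition Kc :: "real \<Rightarrow> real \<Rightarrow> real" where
  "Kc \<alpha> \<beta> = 2 * \<alpha> / (\<alpha> + \<beta>)^2"

definition Mc :: "real \<Rightarrow> real \<Rightarrow> real" where
  "Mc \<alpha> \<beta> = dlt \<alpha> \<beta> powr (1 / (1 - dlt \<alpha> \<beta>))
              - dlt \<alpha> \<beta> powr (dlt \<alpha> \<beta> / (1 - dlt \<alpha> \<beta>))"

definition TM :: "real \<Rightarrow> real \<Rightarrow> real" where
  "TM \<alpha> \<beta> = ln (dlt \<alpha> \<beta>) / (Kc \<alpha> \<beta> * (dlt \<alpha> \<beta> - 1))"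

definition GT :: "real \<Rightarrow> real \<Rightarrow> real \<Rightarrow> real \<Rightarrow> real \<Rightarrow> real \<Rightarrow> real^2 \<Rightarrow> real^2" where
  "GT \<alpha> \<beta> \<omega> \<gamma> k1 T z =
     vector [ z$1 - ln (z$2) / Kc \<alpha> \<beta> - T,
              (z$2) powr (dlt \<alpha> \<beta>) + \<gamma> * (1 + k1 * sin (2 * \<omega> * z$1)) ]"

definition double_eig_one :: "real^2^2 \<Rightarrow> bool" where
  "double_eig_one A \<longleftrightarrow> (\<forall>x::real. det (x *\<^sub>R mat 1 - A) = (x - 1)^2)"

end

theory Submission imports Defs begin
lemma hv[derivative_intros]: "((\<lambda>x::real^'n. x$i) has_derivative (\<lambda>x. x$i)) F"
  by (rule bounded_linear_imp_has_derivative) (rule bounded_linear_vec_nth)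

lemma c1: fixes z :: "real^2" assumes "z$2 > 0" "K \<noteq> 0"
  shows "((\<lambda>x. x$1 - ln (x$2) / K - T) has_derivative (\<lambda>h. h$1 - h$2 / (z$2 * K))) (at z)"
  using assms by (auto intro!: derivative_eq_intros simp: field_simps)

lemma c2: fixes z :: "real^2" assumes "z$2 > 0"
  shows "((\<lambda>x. (x$2) powr d + g * (1 + k * sin (2 * w * x$1))) has_derivative
    (\<lambda>h. 2 * w * g * k * cos (2 * w * z$1) * h$1 + d * z$2 powr (d - 1) * h$2)) (at z)"
  using assms by (auto intro!: derivative_eq_intros simp: field_simps powr_diff)

lemma vec2_eq: "vector [a, b] = a *\<^sub>R axis 1 1 + b *\<^sub>R (axis 2 1 :: real^2)"
  by (simp add: vec_eq_iff forall_2 axis_def)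

lemma GT_deriv:
  fixes z :: "real^2"
  assumes "z$2 > 0" "Kc a b \<noteq> 0"
  shows "(GT a b w g k T has_derivative
     (\<lambda>h. (h$1 - h$2 / (z$2 * Kc a b)) *\<^sub>R axis 1 1
        + (2 * w * g * k * cos (2 * w * z$1) * h$1 + dlt a b * z$2 powr (dlt a b - 1) * h$2) *\<^sub>R axis 2 1)) (at z)"
proof -
  have e: "GT a b w g k T = (\<lambda>z. (z$1 - ln (z$2) / Kc a b - T) *\<^sub>R axis 1 1 +
     ((z$2) powr (dlt a b) + g * (1 + k * sin (2 * w * z$1))) *\<^sub>R axis 2 1)"
    by (rule ext) (simp add: GT_def vec2_eq)
  show ?thesis unfolding e
    by (intro has_derivative_add has_derivative_scaleR_left c1 c2 assms)
qed

lemma mat_entries: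
  "matrix (\<lambda>h::real^2. (h$1 + p * h$2) *\<^sub>R axis 1 1 + (q * h$1 + r * h$2) *\<^sub>R (axis 2 1::real^2))
    = vector [vector [1, p], vector [q, r]]"
  by (simp add: matrix_def vec_eq_iff forall_2 axis_def)

lemma deo: "double_eig_one (vector [vector [1, p], vector [q, r]] :: real^2^2) \<longleftrightarrow> (r = 1 \<and> p * q = 0)"
proof
  assume H: "double_eig_one (vector [vector [1, p], vector [q, r]] :: real^2^2)"
  have h: "(x - 1) * (x - r) - p * q = (x - 1)^2" for x
    using H[unfolded double_eig_one_def, rule_format, of x] by (simp add: det_2 mat_def)
  from h[of 1] have "p * q = 0" by simp
  with h[of 2] show "r = 1 \<and> p * q = 0" by simp
next
  assume "r = 1 \<and> p * q = 0"
  then show "double_eig_one (vector [vector [1, p], vector [q, r]] :: real^2^2)"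
    by (simp add: double_eig_one_def det_2 mat_def power2_eq_square)
qed

lemma neq1: "p \<noteq> 0 \<Longrightarrow> (vector [vector [1, p], vector [q, r]] :: real^2^2) \<noteq> mat 1"
  by (auto simp: vec_eq_iff mat_def forall_2)

lemma basics:
  fixes \<alpha> \<beta> :: real
  assumes "\<alpha> > 0" "0 > \<beta>" "\<bar>\<beta>\<bar> < \<alpha>"
  shows "Kc \<alpha> \<beta> > 0" "dlt \<alpha> \<beta> > 1"
proof -
  have ab: "\<alpha> + \<beta> > 0" using assms by auto
  then show "Kc \<alpha> \<beta> > 0" using assms by (simp add: Kc_def)
  have "(\<alpha> - \<beta>) / (\<alpha> + \<beta>) > 1" using ab assms by (simp add: field_simps)
  then show "dlt \<alpha> \<beta> > 1" unfolding dlt_def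
    by (metis less_trans one_less_power zero_less_one zero_less_numeral pos2)
qed

lemma key:
  fixes \<alpha> \<beta> \<omega> \<gamma> k1 T :: real and z :: "real^2"
  assumes "\<alpha> > 0" "0 > \<beta>" "\<bar>\<beta>\<bar> < \<alpha>"
    and "z$2 > 0" "GT \<alpha> \<beta> \<omega> \<gamma> k1 T z = z" "(GT \<alpha> \<beta> \<omega> \<gamma> k1 T has_derivative L) (at z)"
  shows "ln (z$2) = - Kc \<alpha> \<beta> * T"
    "z$2 powr (dlt \<alpha> \<beta>) + \<gamma> * (1 + k1 * sin (2 * \<omega> * z$1)) = z$2"
    "matrix L = vector [vector [1, - 1 / (z$2 * Kc \<alpha> \<beta>)],
        vector [2 * \<omega> * \<gamma> * k1 * cos (2 * \<omega> * z$1), dlt \<alpha> \<beta> * z$2 powr (dlt \<alpha> \<beta> - 1)]]"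
proof -
  have K: "Kc \<alpha> \<beta> > 0" using basics assms by blast
  from arg_cong[OF assms(5), of "\<lambda>v. v$1"] have "z$1 - ln (z$2) / Kc \<alpha> \<beta> - T = z$1"
    by (simp add: GT_def)
  then show "ln (z$2) = - Kc \<alpha> \<beta> * T" using K by (simp add: field_simps)
  from arg_cong[OF assms(5), of "\<lambda>v. v$2"]
  show "z$2 powr (dlt \<alpha> \<beta>) + \<gamma> * (1 + k1 * sin (2 * \<omega> * z$1)) = z$2"
    by (simp add: GT_def)
  have "L = (\<lambda>h. (h$1 - h$2 / (z$2 * Kc \<alpha> \<beta>)) *\<^sub>R axis 1 1
        + (2 * \<omega> * \<gamma> * k1 * cos (2 * \<omega> * z$1) * h$1 + dlt \<alpha> \<beta> * z$2 powr (dlt \<alpha> \<beta> - 1) * h$2) *\<^sub>R axis 2 1)"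
    using has_derivative_unique[OF assms(6) GT_deriv] assms K by auto
  also have "\<dots> = (\<lambda>h. (h$1 + (- 1 / (z$2 * Kc \<alpha> \<beta>)) * h$2) *\<^sub>R axis 1 1
        + ((2 * \<omega> * \<gamma> * k1 * cos (2 * \<omega> * z$1)) * h$1 + (dlt \<alpha> \<beta> * z$2 powr (dlt \<alpha> \<beta> - 1)) * h$2) *\<^sub>R axis 2 1)"
    by (simp add: field_simps)
  finally show "matrix L = vector [vector [1, - 1 / (z$2 * Kc \<alpha> \<beta>)],
        vector [2 * \<omega> * \<gamma> * k1 * cos (2 * \<omega> * z$1), dlt \<alpha> \<beta> * z$2 powr (dlt \<alpha> \<beta> - 1)]]"
    by (simp only: mat_entries)
qed

lemma eq1: "(g::real) * (1 + k * s) = g * (1 + k) \<Longrightarrow> g * k * s = g * k * 1"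
  by (simp add: algebra_simps)
lemma eq2: "(g::real) * (1 + k * s) = g * (1 - k) \<Longrightarrow> g * k * s = g * k * (-1)"
  by (simp add: algebra_simps)

theorem proposition10:
  fixes \<alpha> \<beta> \<omega> \<gamma> k1 :: real
  assumes "\<alpha> > 0" "0 > \<beta>" "\<bar>\<beta>\<bar> < \<alpha>"
      and "\<omega> > 0" "\<gamma> > 0" "k1 > 0"
  shows "((\<gamma> = Mc \<alpha> \<beta> / (1 + k1) \<or> \<gamma> = Mc \<alpha> \<beta> / (1 - k1)) \<longrightarrow>
            (\<forall>z L. z$2 > 0 \<longrightarrow> GT \<alpha> \<beta> \<omega> \<gamma> k1 (TM \<alpha> \<beta>) z = z \<longrightarrow>
                   (GT \<alpha> \<beta> \<omega> \<gamma> k1 (TM \<alpha> \<beta>) has_derivative L) (at z) \<longrightarrow>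
                   double_eig_one (matrix L) \<and> matrix L \<noteq> mat 1))
       \<and> (\<forall>T z L. T \<ge> 0 \<longrightarrow> z$2 > 0 \<longrightarrow> GT \<alpha> \<beta> \<omega> \<gamma> k1 T z = z \<longrightarrow>
                   (GT \<alpha> \<beta> \<omega> \<gamma> k1 T has_derivative L) (at z) \<longrightarrow>
                   double_eig_one (matrix L) \<longrightarrow>
                   ((\<gamma> = Mc \<alpha> \<beta> / (1 + k1) \<or> \<gamma> = Mc \<alpha> \<beta> / (1 - k1)) \<and> T = TM \<alpha> \<beta>))"
proof -
  define K where "K = Kc \<alpha> \<beta>"
  define d where "d = dlt \<alpha> \<beta>"
  have K: "K > 0" and d: "d > 1" using basics[OF assms(1-3)] by (auto simp: K_def d_def)
  have lnd: "ln d > 0" using d by simp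
  define y0 where "y0 = exp (ln d / (1 - d))"
  have M: "Mc \<alpha> \<beta> = y0 - exp (d * ln y0)"
    using d by (simp add: Mc_def y0_def powr_def flip: d_def)
  have Mpos: "Mc \<alpha> \<beta> > 0"
  proof -
    have "ln d / (1 - d) < 0" using d lnd by (simp add: divide_pos_neg)
    from mult_strict_right_mono_neg[OF d this] have "d * ln y0 < ln y0" by (simp add: y0_def)
    then show ?thesis unfolding M by (simp add: y0_def)
  qed
  have TMe: "TM \<alpha> \<beta> = ln d / (K * (d - 1))" by (simp add: TM_def K_def d_def)
  have common: "cos (2 * \<omega> * z$1) = 0 \<and> d * z$2 powr (d - 1) = 1 \<and> matrix L \<noteq> mat 1
      \<and> double_eig_one (matrix L) \<and> T = TM \<alpha> \<beta>
      \<and> (\<gamma> = Mc \<alpha> \<beta> / (1 + k1) \<or> \<gamma> = Mc \<alpha> \<beta> / (1 - k1))"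
    if H: "z$2 > 0" "GT \<alpha> \<beta> \<omega> \<gamma> k1 T z = z" "(GT \<alpha> \<beta> \<omega> \<gamma> k1 T has_derivative L) (at z)"
       and A: "cos (2 * \<omega> * z$1) = 0 \<and> d * z$2 powr (d - 1) = 1 \<or> T = TM \<alpha> \<beta> \<and> (\<gamma> = Mc \<alpha> \<beta> / (1 + k1) \<or> \<gamma> = Mc \<alpha> \<beta> / (1 - k1))"
     for T z L
  proof -
    note k = key[OF assms(1-3) H, folded K_def d_def]
    define y where "y = z$2"
    have y: "y > 0" using H y_def by simp
    have ly: "ln y = - K * T" using k(1) y_def by simp
    have fp: "exp (d * ln y) + \<gamma> * (1 + k1 * sin (2 * \<omega> * z$1)) = y"
      using k(2) y by (simp add: powr_def y_def)
    have Te: "T = TM \<alpha> \<beta> \<longleftrightarrow> ln y = ln d / (1 - d)"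
    proof -
      have e: "- K * TM \<alpha> \<beta> = ln d / (1 - d)" using TMe K d
        by (simp add: field_simps)
      have "T = TM \<alpha> \<beta> \<longleftrightarrow> - K * T = - K * TM \<alpha> \<beta>" using K by auto
      then show ?thesis unfolding e ly .
    qed
    have de: "d * z$2 powr (d - 1) = 1 \<longleftrightarrow> ln y = ln d / (1 - d)"
    proof -
      have "d * z$2 powr (d - 1) = exp (ln d + (d - 1) * ln y)"
        using y d by (simp add: powr_def y_def exp_add)
      also have "\<dots> = 1 \<longleftrightarrow> ln d + (d - 1) * ln y = 0" by simp
      also have "\<dots> \<longleftrightarrow> ln y = ln d / (1 - d)" using d by (auto simp: field_simps)
      finally show ?thesis .
    qed
    have TT: "T = TM \<alpha> \<beta>" "d * z$2 powr (d - 1) = 1" using A Te de by auto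
    have yy: "y = y0" using TT Te y by (simp add: y0_def flip: exp_ln_iff)
    have G: "\<gamma> * (1 + k1 * sin (2 * \<omega> * z$1)) = Mc \<alpha> \<beta>" using fp yy M by simp
    have cs: "cos (2 * \<omega> * z$1) = 0"
    proof (cases "cos (2 * \<omega> * z$1) = 0 \<and> d * z$2 powr (d - 1) = 1")
      case True then show ?thesis by simp
    next
      case False
      then have gc: "\<gamma> = Mc \<alpha> \<beta> / (1 + k1) \<or> \<gamma> = Mc \<alpha> \<beta> / (1 - k1)" using A by auto
      have sn: "sin (2 * \<omega> * z$1) = 1 \<or> sin (2 * \<omega> * z$1) = -1"
      proof (cases "\<gamma> = Mc \<alpha> \<beta> / (1 + k1)")
        case True
        then have "\<gamma> * (1 + k1) = Mc \<alpha> \<beta>" using assms(6) by (simp add: field_simps)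
        with G have "\<gamma> * k1 * sin (2 * \<omega> * z$1) = \<gamma> * k1 * 1"
          using eq1[of \<gamma> k1 "sin (2 * \<omega> * z$1)"] by simp
        then show ?thesis using assms(5,6) by simp
      next
        case False
        then have g: "\<gamma> = Mc \<alpha> \<beta> / (1 - k1)" using gc by simp
        then have "k1 \<noteq> 1" using assms(5) by auto
        then have "\<gamma> * (1 - k1) = Mc \<alpha> \<beta>" using g by (simp add: field_simps)
        with G have "\<gamma> * k1 * sin (2 * \<omega> * z$1) = \<gamma> * k1 * (-1)"
          using eq2[of \<gamma> k1 "sin (2 * \<omega> * z$1)"] by simp
        moreover have "\<gamma> * k1 \<noteq> 0" using assms(5,6) by simp
        ultimately have "sin (2 * \<omega> * z$1) = -1" by (rule mult_left_cancel[THEN iffD1, rotated])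
        then show ?thesis by simp
      qed
      from sn have "(sin (2 * \<omega> * z$1))^2 = 1" by auto
      moreover have "(sin (2 * \<omega> * z$1))^2 + (cos (2 * \<omega> * z$1))^2 = 1" by (rule sin_cos_squared_add)
      ultimately have "(cos (2 * \<omega> * z$1))^2 = 0" by linarith
      then show ?thesis by simp
    qed
    have gc: "\<gamma> = Mc \<alpha> \<beta> / (1 + k1) \<or> \<gamma> = Mc \<alpha> \<beta> / (1 - k1)"
    proof -
      have "(sin (2 * \<omega> * z$1))^2 + (cos (2 * \<omega> * z$1))^2 = 1" by simp
      then have "(sin (2 * \<omega> * z$1))^2 = 1" using cs by simp
      then have "sin (2 * \<omega> * z$1) = 1 \<or> sin (2 * \<omega> * z$1) = -1"
        by (simp add: power2_eq_1_iff)
      then show ?thesis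
      proof
        assume "sin (2 * \<omega> * z$1) = 1"
        then have "\<gamma> * (1 + k1) = Mc \<alpha> \<beta>" using G by simp
        then show ?thesis using assms(6) by (simp add: field_simps)
      next
        assume "sin (2 * \<omega> * z$1) = -1"
        then have e: "\<gamma> * (1 - k1) = Mc \<alpha> \<beta>" using G by simp
        then have "k1 \<noteq> 1" using Mpos by auto
        then show ?thesis using e by (simp add: field_simps)
      qed
    qed
    have pne: "- 1 / (z$2 * K) \<noteq> 0" using y K y_def by simp
    show ?thesis using TT gc cs k(3) deo neq1[OF pne] by (simp add: K_def d_def)
  qed
  show ?thesis
  proof (intro conjI impI allI)
    fix z L
    assume h: "\<gamma> = Mc \<alpha> \<beta> / (1 + k1) \<or> \<gamma> = Mc \<alpha> \<beta> / (1 - k1)" "0 < z $ 2"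
      "GT \<alpha> \<beta> \<omega> \<gamma> k1 (TM \<alpha> \<beta>) z = z"
      "(GT \<alpha> \<beta> \<omega> \<gamma> k1 (TM \<alpha> \<beta>) has_derivative L) (at z)"
    note c = common[OF h(2-4) disjI2[OF conjI[OF refl h(1)]]]
    from c show "double_eig_one (matrix L)" by (elim conjE)
    from c show "matrix L \<noteq> mat 1" by (elim conjE)
  next
    fix T z L
    assume a: "0 \<le> T" "0 < z $ 2" "GT \<alpha> \<beta> \<omega> \<gamma> k1 T z = z"
      "(GT \<alpha> \<beta> \<omega> \<gamma> k1 T has_derivative L) (at z)" "double_eig_one (matrix L)"
    have "cos (2 * \<omega> * z$1) = 0 \<and> d * z$2 powr (d - 1) = 1"
    proof -
      note k = key[OF assms(1-3) a(2-4), folded K_def d_def]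
      have "- 1 / (z$2 * K) \<noteq> 0" using a K by simp
      then show ?thesis using a(5) k(3) deo assms(4-6) by (simp add: K_def d_def)
    qed
    note c = common[OF a(2-4) disjI1[OF this]]
    from c show "\<gamma> = Mc \<alpha> \<beta> / (1 + k1) \<or> \<gamma> = Mc \<alpha> \<beta> / (1 - k1)" by (elim conjE)
    from c show "T = TM \<alpha> \<beta>" by (elim conjE)
  qed
qed
end
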